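(* Let $\varphi\in\mathbb{T}=\mathbb{R}/\mathbb{Z}$ be badly approximable and let $P\subseteq\mathbb{T}$ be an arc of length at least $\frac12$. For $x_0\in\mathbb{T}$ and each $k\in\mathbb{N}$ define the sequence $(x_i^k)_{i\ge0}$ by $x_0^k=x_0$ and $x_{i+1}^k=x_i^k+k\varphi$ (mod $1$). Then there exist $r>0$ and $d\in\mathbb{N}$, independent of $x_0$, such that $$\left|\{x_i^k : i\in\{1,2,\dots,dk\},\ x_i^k\in P\}\right|\ \ge\ rk$$ for all sufficiently large $k$.
   Context: A real number $\varphi$ is badly approximable if there exists $c>0$ such that $\left|\varphi-\frac pq\right|>\frac{c}{q^2}$ for all rationals $\frac pq$ (with $q\ge1$). The circle $\mathbb{T}$ is identified with $\mathbb{R}/\mathbb{Z}$. *)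

theory Defs
  imports Complex_Main
begin

text \<open>The circle T = R/Z is represented by the representatives in [0,1);
  the projection R -> T is frac.\<close>

definition badly_approximable :: "real \<Rightarrow> bool" where
  "badly_approximable \<phi> \<longleftrightarrow>
     (\<exists>c>0. \<forall>p::int. \<forall>q::int. q \<ge> 1 \<longrightarrow> \<bar>\<phi> - real_of_int p / real_of_int q\<bar> > c / (real_of_int q)^2)"

text \<open>An arc of length l in T: a set lying between the projections of the open
  interval (a, a+l) and of the closed interval [a, a+l] (so open, closed and
  half-open arcs are all covered); arcs have length at most 1.\<close>

definition is_arc :: "real set \<Rightarrow> real \<Rightarrow> bool" where
  "is_arc P l \<longleftrightarrow> 0 \<le> l \<and> l \<le> 1 \<and>
     (\<exists>a. frac ` {a<..<a+l} \<subseteq> P \<and> P \<subseteq> frac ` {a..a+l})"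

definition orbit_pt :: "real \<Rightarrow> real \<Rightarrow> nat \<Rightarrow> nat \<Rightarrow> real" where
  "orbit_pt \<phi> x0 k i = frac (x0 + real i * (real k * \<phi>))"

end

theory Submission
  imports Defs
begin

lemma ba_bound:
  assumes "badly_approximable \<phi>"
  obtains c where "c > 0" "\<And>(p::int) (q::int). q \<ge> 1 \<Longrightarrow> \<bar>real_of_int q * \<phi> - real_of_int p\<bar> > c / real_of_int q"
proof -
  obtain c where c: "c > 0" "\<forall>p::int. \<forall>q::int. q \<ge> 1 \<longrightarrow> \<bar>\<phi> - real_of_int p / real_of_int q\<bar> > c / (real_of_int q)^2"
    using assms unfolding badly_approximable_def by blast
  have "\<bar>real_of_int q * \<phi> - p\<bar> > c / q" if "q \<ge> 1" for p q :: int
  proof -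
    have qp: "real_of_int q > 0" using that by simp
    have "\<bar>\<phi> - p / q\<bar> > c / (real_of_int q)^2" using c that by blast
    hence "real_of_int q * \<bar>\<phi> - p / q\<bar> > real_of_int q * (c / (real_of_int q)^2)"
      using qp by (intro mult_strict_left_mono) auto
    moreover have "real_of_int q * \<bar>\<phi> - p / q\<bar> = \<bar>real_of_int q * \<phi> - p\<bar>"
      using qp by (simp add: abs_mult[symmetric] field_simps)
    moreover have "real_of_int q * (c / (real_of_int q)^2) = c / q"
      using qp by (simp add: power2_eq_square)
    ultimately show ?thesis by simp
  qed
  thus ?thesis using that c(1) by blast
qed

lemma ivt_pos:
  fixes z u \<sigma> :: real
  assumes "0 < \<sigma>" "\<sigma> < 1/2"
  shows "z \<le> u \<Longrightarrow> z + real J * \<sigma> \<ge> u + 1/2 \<Longrightarrow> \<exists>j\<le>J. u < z + real j * \<sigma> \<and> z + real j * \<sigma> < u + 1/2"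
proof (induction J)
  case 0
  then show ?case by simp
next
  case (Suc J)
  show ?case
  proof (cases "z + real J * \<sigma> \<ge> u + 1/2")
    case True
    then show ?thesis using Suc by (meson le_Suc_eq)
  next
    case False
    show ?thesis
    proof (cases "z + real J * \<sigma> > u")
      case True
      then show ?thesis using False by (intro exI[of _ J]) auto
    next
      case F2: False
      have "z + real (Suc J) * \<sigma> = z + real J * \<sigma> + \<sigma>" by (simp add: algebra_simps)
      then show ?thesis using Suc.prems F2 assms by linarith
    qed
  qed
qed

lemma hit:
  fixes z a \<sigma> :: real
  assumes "1/8 \<le> \<bar>\<sigma>\<bar>" "\<bar>\<sigma>\<bar> < 1/2"
  shows "\<exists>j\<le>(12::nat). \<exists>n::int. a + n < z + real j * \<sigma> \<and> z + real j * \<sigma> < a + n + 1/2"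
proof (cases "\<sigma> > 0")
  case True
  define n where "n = ceiling (z - a)"
  have "z \<le> a + n" "a + n < z + 1" unfolding n_def by linarith+
  moreover have "z + real 12 * \<sigma> \<ge> (a + n) + 1/2" using calculation assms True by simp
  ultimately obtain j where "j \<le> 12" "a + n < z + real j * \<sigma> \<and> z + real j * \<sigma> < a + n + 1/2"
    using ivt_pos[of \<sigma> z "a + n" 12] True assms by auto
  then show ?thesis by blast
next
  case False
  define n where "n = floor (z - a - 1/2)"
  have h: "a + n + 1/2 \<le> z" "a + n + 1/2 > z - 1" unfolding n_def by linarith+
  have s: "0 < - \<sigma>" "- \<sigma> < 1/2" using False assms by auto
  have "-z + real 12 * (-\<sigma>) \<ge> -(a + n + 1/2) + 1/2" using h assms False by simp
  then obtain j where "j \<le> 12" "-(a+n+1/2) < -z + real j * (-\<sigma>) \<and> -z + real j * (-\<sigma>) < -(a + n + 1/2) + 1/2"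
    using ivt_pos[OF s, of "-z" "-(a+n+1/2)" 12] h by auto
  then show ?thesis by (intro exI[of _ j] conjI exI[of _ n]) auto
qed

lemma hit_frac:
  fixes w a :: real and n :: int
  assumes "a + n < w" "w < a + n + 1/2"
  shows "frac w \<in> frac ` {a<..<a+1/2}"
proof -
  have "frac w = frac (w - n)" by (metis frac_add_of_int_right diff_add_cancel)
  moreover have "w - n \<in> {a<..<a+1/2}" using assms by auto
  ultimately show ?thesis by blast
qed

lemma step_exists:
  fixes \<phi> c :: real and k :: nat
  assumes c: "c > 0" and bd: "\<And>(p::int) (q::int). q \<ge> 1 \<Longrightarrow> \<bar>real_of_int q * \<phi> - real_of_int p\<bar> > c / real_of_int q"
    and k: "k \<ge> 1"
  shows "\<exists>q::nat. \<exists>p::int. \<exists>\<sigma>::real. q \<ge> 1 \<and> real q \<le> real k / (8*c) + 1 \<and>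
           real q * (real k * \<phi>) = real_of_int p + \<sigma> \<and> 1/8 \<le> \<bar>\<sigma>\<bar> \<and> \<bar>\<sigma>\<bar> < 1/2"
proof -
  define \<beta> where "\<beta> = real k * \<phi>"
  define p0 where "p0 = floor (\<beta> + 1/2)"
  define s where "s = \<beta> - p0"
  have s1: "\<bar>s\<bar> \<le> 1/2" unfolding s_def p0_def by linarith
  have kq: "int k \<ge> 1" using k by simp
  have sb: "\<bar>s\<bar> > c / real k" using bd[OF kq, of p0] unfolding s_def \<beta>_def by simp
  have ckpos: "c / real k > 0" using c k by simp
  have s0: "\<bar>s\<bar> > 0" using sb ckpos by linarith
  have s2: "\<bar>s\<bar> \<noteq> 1/2"
  proof
    assume h: "\<bar>s\<bar> = 1/2"
    have kk: "int (2*k) \<ge> 1" using k by simp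
    define p' where "p' = 2*p0 + (if s > 0 then 1 else -1)"
    have "real_of_int (int (2*k)) * \<phi> - real_of_int p' = 0"
      using h unfolding p'_def s_def \<beta>_def by (auto split: if_splits simp: abs_if)
    moreover have "c / real_of_int (int (2*k)) > 0" using c k by simp
    ultimately show False using bd[OF kk, of p'] by simp
  qed
  define m where "m = nat (ceiling (1 / (8*\<bar>s\<bar>)))"
  have m1: "real m \<ge> 1 / (8*\<bar>s\<bar>)" unfolding m_def by linarith
  have m2: "real m < 1 / (8*\<bar>s\<bar>) + 1"
  proof -
    have "1 / (8*\<bar>s\<bar>) > 0" using s0 by simp
    hence "real m = real_of_int (ceiling (1 / (8*\<bar>s\<bar>)))" unfolding m_def by simp
    thus ?thesis by linarith
  qed
  have mpos: "m \<ge> 1" 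
  proof -
    have "1 / (8*\<bar>s\<bar>) > 0" using s0 by simp
    hence "real m > 0" using m1 by linarith
    thus ?thesis by simp
  qed
  have ms1: "real m * \<bar>s\<bar> \<ge> 1/8" using m1 s0 by (simp add: field_simps)
  have ms2: "real m * \<bar>s\<bar> < 1/2"
  proof (cases "m = 1")
    case True thus ?thesis using s1 s2 by simp
  next
    case False
    hence "real m \<ge> 2" using mpos by simp
    hence "1 / (8*\<bar>s\<bar>) > 1" using m2 by linarith
    hence "\<bar>s\<bar> < 1/8" using s0 by (simp add: field_simps)
    moreover have "real m * \<bar>s\<bar> < (1 / (8*\<bar>s\<bar>) + 1) * \<bar>s\<bar>" using m2 s0 by (intro mult_strict_right_mono) auto
    moreover have "(1 / (8*\<bar>s\<bar>) + 1) * \<bar>s\<bar> = 1/8 + \<bar>s\<bar>" using s0 by (simp add: field_simps)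
    ultimately show ?thesis by linarith
  qed
  have "1 / \<bar>s\<bar> < real k / c"
    using sb s0 c k by (simp add: field_simps)
  hence "1 / (8*\<bar>s\<bar>) < real k / (8*c)" by (simp add: field_simps)
  hence mq: "real m \<le> real k / (8*c) + 1" using m2 by linarith
  show ?thesis
  proof (intro exI conjI)
    show "m \<ge> 1" by (rule mpos)
    show "real m \<le> real k / (8*c) + 1" by (rule mq)
    show "real m * (real k * \<phi>) = real_of_int (int m * p0) + real m * s"
      unfolding s_def \<beta>_def by (simp add: algebra_simps)
    show "1/8 \<le> \<bar>real m * s\<bar>" using ms1 by (simp add: abs_mult)
    show "\<bar>real m * s\<bar> < 1/2" using ms2 by (simp add: abs_mult)
  qed
qed

lemma orbit_inj:
  assumes ba: "badly_approximable \<phi>" and k: "k \<ge> 1"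
  shows "inj_on (orbit_pt \<phi> x0 k) A"
proof (rule inj_onI)
  fix i i' assume "i \<in> A" "i' \<in> A" and eq: "orbit_pt \<phi> x0 k i = orbit_pt \<phi> x0 k i'"
  obtain c where c: "c > 0" and bd: "\<And>(p::int) (q::int). q \<ge> 1 \<Longrightarrow> \<bar>real_of_int q * \<phi> - real_of_int p\<bar> > c / real_of_int q"
    using ba_bound[OF ba] by blast
  from eq obtain n :: int where n: "x0 + real i * (real k * \<phi>) = x0 + real i' * (real k * \<phi>) + of_int n"
    unfolding orbit_pt_def by (erule frac_eqE)
  show "i = i'"
  proof (rule ccontr)
    assume ne: "i \<noteq> i'"
    define q :: int where "q = \<bar>int i - int i'\<bar> * int k"
    define p :: int where "p = (if i > i' then n else - n)"
    have "\<bar>int i - int i'\<bar> \<ge> 1" using ne by linarith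
    moreover have "int k \<ge> 1" using k by simp
    ultimately have q1: "q \<ge> 1" unfolding q_def using mult_mono[of 1 "\<bar>int i - int i'\<bar>" 1 "int k"] by simp
    have "real_of_int q * \<phi> - real_of_int p = 0"
    proof (cases "i > i'")
      case True
      hence "real_of_int q = (real i - real i') * real k" unfolding q_def by simp
      moreover have "real i * (real k * \<phi>) - real i' * (real k * \<phi>) = n" using n by linarith
      ultimately show ?thesis using True unfolding p_def by (simp only:) (simp add: algebra_simps)
    next
      case False
      hence "real_of_int q = (real i' - real i) * real k" unfolding q_def by simp
      moreover have "real i * (real k * \<phi>) - real i' * (real k * \<phi>) = n" using n by linarith
      ultimately show ?thesis using False unfolding p_def by (simp only:) (simp add: algebra_simps)
    qed
    moreover have "c / real_of_int q > 0" using c q1 by simp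
    ultimately show False using bd[OF q1, of p] by simp
  qed
qed

theorem theorem3p4:
  fixes \<phi> :: real and P :: "real set" and l :: real
  assumes "badly_approximable \<phi>"
    and "is_arc P l" and "l \<ge> 1/2"
  shows "\<exists>r::real. \<exists>d::nat. r > 0 \<and>
           (\<forall>x0::real. \<forall>\<^sub>F k in sequentially.
              real (card {orbit_pt \<phi> x0 k i | i. i \<in> {1..d*k} \<and> orbit_pt \<phi> x0 k i \<in> P})
                \<ge> r * real k)"
proof -
  note ba = assms(1)
  obtain a where arc0: "frac ` {a<..<a+l} \<subseteq> P" using assms(2) unfolding is_arc_def by blast
  have arc: "frac ` {a<..<a+1/2} \<subseteq> P"
    using arc0 assms(3) by (smt (verit, best) greaterThanLessThan_iff image_mono subset_eq subset_trans)
  obtain c where c: "c > 0" and bd: "\<And>(p::int) (q::int). q \<ge> 1 \<Longrightarrow> \<bar>real_of_int q * \<phi> - real_of_int p\<bar> > c / real_of_int q"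
    using ba_bound[OF ba] by blast
  define d :: nat where "d = nat (ceiling (2/c)) + 2"
  have dge: "real d \<ge> 2/c + 2" unfolding d_def by linarith
  have main: "real (card {orbit_pt \<phi> x0 k i | i. i \<in> {1..d*k} \<and> orbit_pt \<phi> x0 k i \<in> P}) \<ge> 1/13 * real k"
    if k12: "k \<ge> 12" for x0 k
  proof -
    have k1: "k \<ge> 1" using k12 by simp
    obtain q p \<sigma> where q1: "q \<ge> (1::nat)" and qb: "real q \<le> real k / (8*c) + 1"
      and qe: "real q * (real k * \<phi>) = real_of_int p + \<sigma>" and s1: "1/8 \<le> \<bar>\<sigma>\<bar>" and s2: "\<bar>\<sigma>\<bar> < 1/2"
      using step_exists[OF c bd k1] by blast
    define H where "H = {i \<in> {1..d*k}. orbit_pt \<phi> x0 k i \<in> P}"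
    define N where "N = d*k - 12*q"
    have finH: "finite H" unfolding H_def by simp
    have cover: "\<exists>j\<in>{0..12::nat}. u + j*q \<in> H" if u: "u \<in> {1..N}" for u
    proof -
      obtain j n where j: "j \<le> (12::nat)" and n: "a + real_of_int n < x0 + real u * (real k * \<phi>) + real j * \<sigma>"
        "x0 + real u * (real k * \<phi>) + real j * \<sigma> < a + real_of_int n + 1/2"
        using hit[OF s1 s2, of a "x0 + real u * (real k * \<phi>)"] by blast
      have "real (u + j*q) * (real k * \<phi>) = real u * (real k * \<phi>) + real j * (real q * (real k * \<phi>))"
        by (simp add: algebra_simps)
      also have "\<dots> = real u * (real k * \<phi>) + real j * \<sigma> + real_of_int (int j * p)"
        using qe by (simp add: algebra_simps)
      finally have e: "x0 + real (u + j*q) * (real k * \<phi>) = (x0 + real u * (real k * \<phi>) + real j * \<sigma>) + real_of_int (int j * p)"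
        by linarith
      have "orbit_pt \<phi> x0 k (u + j*q) = frac (x0 + real u * (real k * \<phi>) + real j * \<sigma>)"
        unfolding orbit_pt_def e by (rule frac_add_of_int_right)
      hence "orbit_pt \<phi> x0 k (u + j*q) \<in> P" using hit_frac[OF n] arc by auto
      moreover have "u + j*q \<in> {1..d*k}"
      proof -
        have jq: "j*q \<le> 12*q" using j by (rule mult_le_mono1)
        have "1 \<le> u" "u \<le> d*k - 12*q" using u unfolding N_def by auto
        thus ?thesis using jq by (simp only: atLeastAtMost_iff) linarith
      qed
      ultimately show ?thesis unfolding H_def using j by auto
    qed
    have sub: "{1..N} \<subseteq> (\<Union>j\<in>{0..12::nat}. (\<lambda>h. h - j*q) ` H)"
    proof
      fix u assume "u \<in> {1..N}"
      then obtain j where "j \<in> {0..12::nat}" "u + j*q \<in> H" using cover by blast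
      thus "u \<in> (\<Union>j\<in>{0..12::nat}. (\<lambda>h. h - j*q) ` H)" by (intro UN_I[of j]) (auto intro: image_eqI[of _ _ "u + j*q"])
    qed
    have "N = card {1..N}" by simp
    also have "\<dots> \<le> card (\<Union>j\<in>{0..12::nat}. (\<lambda>h. h - j*q) ` H)"
      using sub finH by (intro card_mono) auto
    also have "\<dots> \<le> (\<Sum>j\<in>{0..12::nat}. card ((\<lambda>h. h - j*q) ` H))" by (rule card_UN_le) simp
    also have "\<dots> \<le> (\<Sum>j\<in>{0..12::nat}. card H)" by (intro sum_mono card_image_le finH)
    also have "\<dots> = 13 * card H" by simp
    finally have NH: "real N \<le> 13 * real (card H)" by linarith
    have Nge: "real N \<ge> real d * real k - 12 * real q"
    proof (cases "12*q \<le> d*k")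
      case True
      hence "real N = real (d*k) - real (12*q)" unfolding N_def by (simp only: of_nat_diff)
      thus ?thesis by simp
    next
      case False
      hence "real (d*k) < real (12*q)" by (simp only: of_nat_less_iff not_le)
      thus ?thesis by simp
    qed
    have "real d * real k \<ge> (2/c + 2) * real k" using dge by (intro mult_right_mono) auto
    moreover have "12 * real q \<le> 12 * (real k / (8*c)) + 12" using qb by linarith
    moreover have "(2/c + 2) * real k - (12 * (real k / (8*c)) + 12) = real k / (2*c) + 2 * real k - 12"
      using c by (simp add: field_simps)
    moreover have "real k / (2*c) \<ge> 0" using c by simp
    moreover have "real k \<ge> 12" using k12 by simp
    ultimately have "real N \<ge> real k" using Nge by linarith
    hence CH: "real (card H) \<ge> 1/13 * real k" using NH by linarith
    have "{orbit_pt \<phi> x0 k i | i. i \<in> {1..d*k} \<and> orbit_pt \<phi> x0 k i \<in> P} = orbit_pt \<phi> x0 k ` H"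
      unfolding H_def by blast
    moreover have "card (orbit_pt \<phi> x0 k ` H) = card H" by (intro card_image orbit_inj[OF ba k1])
    ultimately show ?thesis using CH by simp
  qed
  show ?thesis
  proof (intro exI[of _ "1/13"] exI[of _ d] conjI allI)
    fix x0 :: real
    show "\<forall>\<^sub>F k in sequentially.
              real (card {orbit_pt \<phi> x0 k i | i. i \<in> {1..d*k} \<and> orbit_pt \<phi> x0 k i \<in> P})
                \<ge> 1/13 * real k"
      by (rule eventually_sequentiallyI[of 12]) (rule main)
  qed simp
qed

end
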